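(* Let $d\in\mathbb{R}^m$ with $d>0$, let $\ell$ be a certified lower bound for $A^\top x\le u$ with certificate matrix $\Lambda$, and suppose $f(d,\ell)=1$. Let $i\in\{1,\dots,m\}$, set $L_i:=a_i^\top y(d,\ell)-\gamma_i(d,\ell)$, and define $$\hat\lambda_i:=\gamma_i(d,\ell)\,D\,t(d,\ell)-DA^\top B(d)^{-1}a_i,\qquad \tilde\lambda_i:=\Lambda\hat\lambda_i^-+\hat\lambda_i^+ .$$ Then $A\tilde\lambda_i=-a_i$, $\tilde\lambda_i\ge 0$ and $-\tilde\lambda_i^\top u\ge L_i$; i.e., $L_i$ is a certified lower bound on constraint $i$ with certificate $\tilde\lambda_i$.
   Context: Standing assumption: $A=[a_1|\cdots|a_m]\in\mathbb{R}^{n\times m}$ has columns of unit Euclidean norm and $\{A\lambda:\lambda\ge0\}=\mathbb{R}^n$; $u\in\mathbb{R}^m$. For $d\in\mathbb{R}^m$, $D=\mathrm{diag}(d)$. For $d>0$, $\ell\in\mathbb{R}^m$: $r(\ell)=\tfrac12(u+\ell)$, $v(\ell)=\tfrac12(u-\ell)$, $B(d)=ADA^\top$, $y(d,\ell)=B(d)^{-1}ADr(\ell)$, $t(d,\ell)=A^\top y(d,\ell)-r(\ell)$, $f(d,\ell)=v(\ell)^\top Dv(\ell)-t(d,\ell)^\top Dt(d,\ell)$, and when $f(d,\ell)>0$, $\gamma_i(d,\ell)=\sqrt{f(d,\ell)\,a_i^\top B(d)^{-1}a_i}$. A scalar $\ell_i$ is a certified lower bound on constraint $i$ with certificate $\lambda_i\in\mathbb{R}^m$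 if $A\lambda_i=-a_i$, $\lambda_i\ge0$, $-\lambda_i^\top u\ge\ell_i$. A vector $\ell$ is a certified lower bound with certificate matrix $\Lambda\in\mathbb{R}^{m\times m}$ if $A\Lambda=-A$, $\Lambda\ge0$ entrywise, $-\Lambda^\top u\ge\ell$. For a vector $w$, $w^+,w^-\ge0$ are its componentwise positive and negative parts, $w=w^+-w^-$. *)

theory Defs
  imports "HOL-Analysis.Analysis"
begin

text \<open>A :: real^'m^'n is an n x m matrix; its i-th column is a_i = column i A.\<close>

definition diagm :: "real^'m \<Rightarrow> real^'m^'m" where
  "diagm d = (\<chi> i j. if i = j then d $ i else 0)"

definition pospart :: "real^'m \<Rightarrow> real^'m" where
  "pospart w = (\<chi> i. max (w $ i) 0)"

definition negpart :: "real^'m \<Rightarrow> real^'m" where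
  "negpart w = (\<chi> i. max (- (w $ i)) 0)"

definition standing_assm :: "real^'m^'n \<Rightarrow> bool" where
  "standing_assm A \<longleftrightarrow> (\<forall>i. norm (column i A) = 1) \<and>
     {A *v lam | lam. \<forall>j. 0 \<le> lam $ j} = UNIV"

definition rvec :: "real^'m \<Rightarrow> real^'m \<Rightarrow> real^'m" where
  "rvec u l = (1/2) *\<^sub>R (u + l)"

definition vvec :: "real^'m \<Rightarrow> real^'m \<Rightarrow> real^'m" where
  "vvec u l = (1/2) *\<^sub>R (u - l)"

definition Bmat :: "real^'m^'n \<Rightarrow> real^'m \<Rightarrow> real^'n^'n" where
  "Bmat A d = A ** diagm d ** transpose A"

definition yvec :: "real^'m^'n \<Rightarrow> real^'m \<Rightarrow> real^'m \<Rightarrow> real^'m \<Rightarrow> real^'n" where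
  "yvec A u d l = matrix_inv (Bmat A d) *v (A *v (diagm d *v rvec u l))"

definition tvec :: "real^'m^'n \<Rightarrow> real^'m \<Rightarrow> real^'m \<Rightarrow> real^'m \<Rightarrow> real^'m" where
  "tvec A u d l = transpose A *v yvec A u d l - rvec u l"

definition fval :: "real^'m^'n \<Rightarrow> real^'m \<Rightarrow> real^'m \<Rightarrow> real^'m \<Rightarrow> real" where
  "fval A u d l = vvec u l \<bullet> (diagm d *v vvec u l) - tvec A u d l \<bullet> (diagm d *v tvec A u d l)"

definition gam :: "real^'m^'n \<Rightarrow> real^'m \<Rightarrow> real^'m \<Rightarrow> real^'m \<Rightarrow> 'm \<Rightarrow> real" where
  "gam A u d l i = sqrt (fval A u d l * (column i A \<bullet> (matrix_inv (Bmat A d) *v column i A)))"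

definition cert_lb_constraint :: "real^'m^'n \<Rightarrow> real^'m \<Rightarrow> 'm \<Rightarrow> real \<Rightarrow> real^'m \<Rightarrow> bool" where
  "cert_lb_constraint A u i li lam \<longleftrightarrow>
     A *v lam = - column i A \<and> (\<forall>j. 0 \<le> lam $ j) \<and> - (lam \<bullet> u) \<ge> li"

definition cert_lb :: "real^'m^'n \<Rightarrow> real^'m \<Rightarrow> real^'m \<Rightarrow> real^'m^'m \<Rightarrow> bool" where
  "cert_lb A u l Lam \<longleftrightarrow>
     A ** Lam = - A \<and> (\<forall>j k. 0 \<le> Lam $ j $ k) \<and>
     (\<forall>j. - ((transpose Lam *v u) $ j) \<ge> l $ j)"

end

theory Submission
  imports Defs
begin

lemma inv_mat:
  fixes M :: "real^'n^'n"
  assumes "invertible M"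
  shows "M ** matrix_inv M = mat 1 \<and> matrix_inv M ** M = mat 1"
  using assms unfolding invertible_def matrix_inv_def by (rule someI_ex)

lemma adj: "(transpose M *v x) \<bullet> y = x \<bullet> ((M::real^'a^'b) *v y)"
  by (simp add: dot_lmul_matrix)

lemma diag_mv: "diagm d *v x = (\<chi> k. d$k * x$k)"
  unfolding diagm_def matrix_vector_mult_def vec_eq_iff
  by (simp add: if_distrib[of "\<lambda>c. c * _"] sum.delta cong: if_cong)

lemma inner_diag: "x \<bullet> (diagm d *v y) = (\<Sum>k\<in>UNIV. d$k * (x$k * y$k))"
  by (simp add: diag_mv inner_vec_def algebra_simps)

lemma diag_sym: "(diagm d *v x) \<bullet> y = x \<bullet> (diagm d *v y)"
  by (simp add: diag_mv inner_vec_def algebra_simps)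

lemma transpose_diag: "transpose (diagm d) = diagm d"
  by (simp add: diagm_def transpose_def vec_eq_iff)

lemma neg_mv: "(- M) *v x = - ((M::real^'a^'b) *v x)"
  by (simp add: matrix_vector_mult_def vec_eq_iff sum_negf)

lemma quad_nonneg: assumes "\<forall>j. 0 < d $ j" shows "0 \<le> x \<bullet> (diagm d *v x)"
  unfolding inner_diag using assms by (intro sum_nonneg) (simp add: less_imp_le)

lemma quad_zero: assumes "\<forall>j. 0 < d $ j" and "x \<bullet> (diagm d *v x) = 0" shows "x = 0"
proof -
  have "\<forall>k\<in>UNIV. d$k * (x$k * x$k) = 0"
    using assms(2) unfolding inner_diag
    by (subst sum_nonneg_eq_0_iff[symmetric]) (use assms(1) in \<open>auto simp: less_imp_le\<close>)
  then show ?thesis using assms(1) by (auto simp: vec_eq_iff) (metis less_irrefl)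
qed

lemma sq_aux:
  assumes "0 \<le> (c::real)" shows "sqrt c * \<bar>x\<bar> * (sqrt c * \<bar>x\<bar>) = x * (c * x)"
proof -
  have "sqrt c * \<bar>x\<bar> * (sqrt c * \<bar>x\<bar>) = (sqrt c * sqrt c) * (\<bar>x\<bar> * \<bar>x\<bar>)"
    by (simp add: algebra_simps)
  also have "\<dots> = c * (x * x)" using assms by (simp add: abs_mult_self_eq)
  finally show ?thesis by simp
qed

theorem proposition2:
  fixes A :: "real^'m^'n" and u d l :: "real^'m" and Lam :: "real^'m^'m" and i :: 'm
  assumes "standing_assm A"
    and "\<forall>j. 0 < d $ j"
    and "cert_lb A u l Lam"
    and "fval A u d l = 1"
  defines "Li \<equiv> column i A \<bullet> yvec A u d l - gam A u d l i"
    and "ltil \<equiv> Lam *v negpart (gam A u d l i *\<^sub>R (diagm d *v tvec A u d l)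
                 - diagm d *v (transpose A *v (matrix_inv (Bmat A d) *v column i A)))
               + pospart (gam A u d l i *\<^sub>R (diagm d *v tvec A u d l)
                 - diagm d *v (transpose A *v (matrix_inv (Bmat A d) *v column i A)))"
  shows "A *v ltil = - column i A \<and> (\<forall>j. 0 \<le> ltil $ j) \<and> - (ltil \<bullet> u) \<ge> Li"
proof -
  note dpos = assms(2)
  define D where "D = diagm d"
  define B where "B = Bmat A d"
  define Bi where "Bi = matrix_inv B"
  define a where "a = column i A"
  define r where "r = rvec u l"
  define v where "v = vvec u l"
  define y where "y = yvec A u d l"
  define t where "t = tvec A u d l"
  define w where "w = Bi *v a"
  define s where "s = transpose A *v w"
  define g where "g = gam A u d l i"
  define z where "z = g *\<^sub>R t - s"
  define lh where "lh = D *v z"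
  define p where "p = pospart lh"
  define n where "n = negpart lh"
  have Bdef: "B = A ** D ** transpose A" by (simp add: B_def Bmat_def D_def)
  have lh_eq: "g *\<^sub>R (D *v t) - D *v s = lh"
    by (simp add: lh_def z_def matrix_vector_mult_diff_distrib matrix_vector_mult_scaleR)
  have ltil: "ltil = Lam *v n + p"
    unfolding ltil_def n_def p_def lh_eq[symmetric]
    by (simp add: D_def g_def t_def s_def w_def Bi_def B_def a_def)
  have BA: "B *v x = A *v (D *v (transpose A *v x))" for x
    by (simp add: Bdef matrix_vector_mul_assoc matrix_mul_assoc del: transpose_matrix_vector)
  have Bsym: "transpose B = B"
    by (simp add: Bdef matrix_transpose_mul transpose_diag D_def matrix_mul_assoc del: transpose_matrix_vector)
  have surj: "\<exists>lam. A *v lam = x" for x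
    using assms(1) unfolding standing_assm_def by (auto simp: set_eq_iff) metis
  have Binv: "invertible B"
  proof -
    have "x = 0" if "B *v x = 0" for x
    proof -
      have "(transpose A *v x) \<bullet> (D *v (transpose A *v x)) = x \<bullet> (B *v x)"
        by (simp only: adj BA)
      then have "transpose A *v x = 0" using that quad_zero[OF dpos] by (simp add: D_def)
      moreover obtain lam where "A *v lam = x" using surj by blast
      ultimately have "x \<bullet> x = 0"
        by (metis adj inner_commute inner_zero_left)
      then show ?thesis by simp
    qed
    then show ?thesis
      using matrix_left_invertible_ker invertible_left_inverse by blast
  qed
  have BBi: "B ** Bi = mat 1" and BiB: "Bi ** B = mat 1" using inv_mat[OF Binv] Bi_def by auto
  have By: "B *v y = A *v (D *v r)"
  proof -
    have "y = Bi *v (A *v (D *v r))"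
      by (simp add: y_def yvec_def Bi_def B_def D_def r_def del: transpose_matrix_vector)
    then have "B *v y = (B ** Bi) *v (A *v (D *v r))"
      using matrix_vector_mul_assoc[of B Bi] by simp
    then show ?thesis by (simp add: BBi)
  qed
  have tdef: "t = transpose A *v y - r" by (simp add: t_def tvec_def y_def r_def)
  have ADt: "A *v (D *v t) = 0"
    using By by (simp add: tdef matrix_vector_mult_diff_distrib BA del: transpose_matrix_vector)
  have Bw: "B *v w = a" by (simp add: w_def matrix_vector_mul_assoc BBi)
  have ADs: "A *v (D *v s) = a" using Bw by (simp add: s_def BA del: transpose_matrix_vector)
  have Alh: "A *v lh = - a"
    unfolding lh_eq[symmetric]
    by (simp add: matrix_vector_mult_diff_distrib matrix_vector_mult_scaleR ADt ADs del: transpose_matrix_vector)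
  have lhpn: "lh = p - n"
    by (simp add: p_def n_def pospart_def negpart_def vec_eq_iff max_def)
  have cert: "A ** Lam = - A" "\<forall>j k. 0 \<le> Lam $ j $ k" "\<forall>j. - ((transpose Lam *v u) $ j) \<ge> l $ j"
    using assms(3) unfolding cert_lb_def by auto
  have nn: "0 \<le> n $ k" for k by (simp add: n_def negpart_def)
  have pn: "0 \<le> p $ k" for k by (simp add: p_def pospart_def)
  have P1: "A *v ltil = - a"
  proof -
    have "A *v ltil = (A ** Lam) *v n + A *v p"
      by (simp add: ltil matrix_vector_right_distrib matrix_vector_mul_assoc del: transpose_matrix_vector)
    also have "\<dots> = A *v (p - n)"
      by (simp add: cert(1) neg_mv matrix_vector_mult_diff_distrib del: transpose_matrix_vector)
    finally show ?thesis using Alh lhpn by simp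
  qed
  have P2: "\<forall>j. 0 \<le> ltil $ j"
  proof
    fix j
    have "0 \<le> (Lam *v n) $ j"
      unfolding matrix_vector_mult_def using cert(2) nn by (simp add: sum_nonneg)
    then show "0 \<le> ltil $ j" using pn[of j] by (simp add: ltil)
  qed
  have ul: "u = r + v" "l = r - v"
    by (simp_all add: r_def v_def rvec_def vvec_def vec_eq_iff field_simps)
  have step1: "n \<bullet> l - p \<bullet> u \<le> - (ltil \<bullet> u)"
  proof -
    have "(Lam *v n) \<bullet> u = n \<bullet> (transpose Lam *v u)"
      by (metis adj inner_commute transpose_transpose)
    moreover have "n \<bullet> (transpose Lam *v u) \<le> - (n \<bullet> l)"
    proof -
      have "n \<bullet> (transpose Lam *v u) = (\<Sum>k\<in>UNIV. n$k * (transpose Lam *v u)$k)"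
        by (simp add: inner_vec_def del: transpose_matrix_vector)
      also have "\<dots> \<le> (\<Sum>k\<in>UNIV. n$k * (- l$k))"
      proof (rule sum_mono)
        fix k
        have "(transpose Lam *v u)$k \<le> - l$k" using cert(3) by (meson le_minus_iff)
        then show "n$k * (transpose Lam *v u)$k \<le> n$k * (- l$k)"
          using nn[of k] by (rule mult_left_mono)
      qed
      also have "\<dots> = - (n \<bullet> l)" by (simp add: inner_vec_def sum_negf)
      finally show ?thesis .
    qed
    ultimately show ?thesis by (simp add: ltil inner_add_left)
  qed
  have step2: "n \<bullet> l - p \<bullet> u = - (lh \<bullet> r) - (p + n) \<bullet> v"
    by (simp add: ul lhpn inner_simps algebra_simps)
  have tDr: "t \<bullet> (D *v r) = - (t \<bullet> (D *v t))"
  proof -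
    have r': "r = transpose A *v y - t" by (simp add: tdef del: transpose_matrix_vector)
    have "t \<bullet> (D *v (transpose A *v y)) = (D *v t) \<bullet> (transpose A *v y)"
      unfolding D_def by (rule diag_sym[symmetric])
    also have "\<dots> = (transpose A *v y) \<bullet> (D *v t)" by (rule inner_commute)
    also have "\<dots> = y \<bullet> (A *v (D *v t))" by (rule adj)
    also have "\<dots> = 0" by (simp add: ADt)
    finally have "t \<bullet> (D *v (transpose A *v y)) = 0" .
    then show ?thesis
      by (simp add: r' matrix_vector_mult_diff_distrib inner_diff_right del: transpose_matrix_vector)
  qed
  have sDr: "s \<bullet> (D *v r) = a \<bullet> y"
  proof -
    have "s \<bullet> (D *v r) = w \<bullet> (A *v (D *v r))" unfolding s_def by (rule adj)
    also have "\<dots> = w \<bullet> (B *v y)" by (simp only: By)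
    also have "\<dots> = (transpose B *v w) \<bullet> y" by (rule adj[symmetric])
    also have "\<dots> = a \<bullet> y" by (simp only: Bsym Bw)
    finally show ?thesis .
  qed
  have lhr: "- (lh \<bullet> r) = g * (t \<bullet> (D *v t)) + a \<bullet> y"
  proof -
    have "lh \<bullet> r = z \<bullet> (D *v r)" by (simp add: lh_def D_def diag_sym)
    then show ?thesis by (simp add: z_def inner_diff_left tDr sDr)
  qed
  have tDs: "t \<bullet> (D *v s) = 0"
  proof -
    have "t \<bullet> (D *v s) = (D *v t) \<bullet> s" unfolding D_def by (rule diag_sym[symmetric])
    also have "\<dots> = (transpose A *v w) \<bullet> (D *v t)" by (simp only: s_def inner_commute)
    also have "\<dots> = w \<bullet> (A *v (D *v t))" by (rule adj)
    finally show ?thesis by (simp add: ADt)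
  qed
  have sDs: "s \<bullet> (D *v s) = a \<bullet> w"
  proof -
    have "s \<bullet> (D *v s) = w \<bullet> (A *v (D *v s))" unfolding s_def by (rule adj)
    then show ?thesis by (simp add: ADs inner_commute)
  qed
  have aw: "0 \<le> a \<bullet> w" using quad_nonneg[OF dpos, of s] sDs D_def by simp
  have fv: "v \<bullet> (D *v v) - t \<bullet> (D *v t) = 1"
    using assms(4) by (simp add: fval_def D_def v_def t_def)
  have g0: "0 \<le> g"
    using aw by (simp add: g_def gam_def assms(4) a_def[symmetric] Bi_def B_def w_def)
  have g2: "g * g = a \<bullet> w"
    using aw by (simp add: g_def gam_def assms(4) a_def[symmetric] Bi_def B_def w_def)
  have zDz: "z \<bullet> (D *v z) = g * g * (v \<bullet> (D *v v))"
  proof -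
    have sDt: "s \<bullet> (D *v t) = t \<bullet> (D *v s)"
      by (metis D_def diag_sym inner_commute)
    have Dz: "D *v z = g *\<^sub>R (D *v t) - D *v s"
      by (simp add: z_def matrix_vector_mult_diff_distrib matrix_vector_mult_scaleR del: transpose_matrix_vector)
    have "z \<bullet> (D *v z) = g * g * (t \<bullet> (D *v t)) - g * (t \<bullet> (D *v s)) - g * (s \<bullet> (D *v t)) + s \<bullet> (D *v s)"
      unfolding Dz by (simp add: z_def inner_diff_left inner_diff_right algebra_simps)
    then show ?thesis using tDs sDs sDt g2 fv by (simp add: algebra_simps)
  qed
  define X where "X = (\<chi> k. sqrt (d$k) * \<bar>z$k\<bar>)"
  define Y where "Y = (\<chi> k. sqrt (d$k) * \<bar>v$k\<bar>)"
  have pnv: "(p + n) \<bullet> v \<le> X \<bullet> Y"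
    unfolding inner_vec_def inner_real_def X_def Y_def
  proof (rule sum_mono)
    fix k
    have "(p + n) $ k = d$k * \<bar>z$k\<bar>"
      using dpos[rule_format, of k]
      by (auto simp: p_def n_def pospart_def negpart_def lh_def D_def diag_mv max_def zero_le_mult_iff abs_if mult_le_0_iff)
    moreover have "sqrt (d$k) * sqrt (d$k) = d$k" using dpos[rule_format, of k] by simp
    moreover have "d$k * \<bar>z$k\<bar> * v$k \<le> d$k * \<bar>z$k\<bar> * \<bar>v$k\<bar>"
      using dpos[rule_format, of k] by (intro mult_left_mono) auto
    ultimately show "(p + n) $ k * v $ k \<le> (\<chi> k. sqrt (d$k) * \<bar>z$k\<bar>) $ k * (\<chi> k. sqrt (d$k) * \<bar>v$k\<bar>) $ k"
      by (simp add: algebra_simps)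
  qed
  have XX: "X \<bullet> X = z \<bullet> (D *v z)"
    unfolding D_def inner_vec_def X_def
    by (rule sum.cong) (use dpos in \<open>auto simp: less_imp_le diag_mv sq_aux\<close>)
  have YY: "Y \<bullet> Y = v \<bullet> (D *v v)"
    unfolding D_def inner_vec_def Y_def
    by (rule sum.cong) (use dpos in \<open>auto simp: less_imp_le diag_mv sq_aux\<close>)
  have vDv: "0 \<le> v \<bullet> (D *v v)" using quad_nonneg[OF dpos] D_def by simp
  have "X \<bullet> Y \<le> norm X * norm Y" by (rule norm_cauchy_schwarz)
  also have "\<dots> = sqrt (g * g * (v \<bullet> (D *v v))) * sqrt (v \<bullet> (D *v v))"
    by (simp add: norm_eq_sqrt_inner XX YY zDz)
  also have "\<dots> = g * (v \<bullet> (D *v v))"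
    using g0 vDv by (simp add: real_sqrt_mult)
  finally have CS: "(p + n) \<bullet> v \<le> g * (v \<bullet> (D *v v))" using pnv by linarith
  have P3: "a \<bullet> y - g \<le> - (ltil \<bullet> u)"
    using step1 step2 lhr CS fv by (simp add: algebra_simps)
  show ?thesis using P1 P2 P3 by (simp add: Li_def a_def y_def g_def)
qed

end
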